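(* For every $n\ge 1$, $\gamma_{\rm i}(P_n)=\lceil n/2\rceil$, where $P_n$ is the path on $n$ vertices.
   Context: Indicated domination game on a graph $G$: two players, Dominator and Staller, alternate. In each round Dominator indicates a vertex $v$ not yet dominated by the vertices previously selected by Staller (a vertex dominates itself and its neighbors), and Staller must select a vertex of the closed neighborhood $N[v]$, adding it to a set $D$. The game ends when $D$ is a dominating set of $G$. Dominator wants to minimize $|D|$ and Staller to maximize it; the size of $D$ under optimal play of both is the indicated domination number $\gamma_{\rm i}(G)$. *)

theory Defs
  imports Complex_Main
begin

text \<open>A graph is given by a finite vertex set V and a symmetric irreflexive
  adjacency relation E (only its restriction to V matters).\<close>

definition closed_nbhd :: "'a set \<Rightarrow> ('a \<Rightarrow> 'a \<Rightarrow> bool) \<Rightarrow> 'a \<Rightarrow> 'a set" where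
  "closed_nbhd V E v = {v} \<union> {u \<in> V. E v u}"

definition dominated_by :: "'a set \<Rightarrow> ('a \<Rightarrow> 'a \<Rightarrow> bool) \<Rightarrow> 'a set \<Rightarrow> 'a set" where
  "dominated_by V E D = (\<Union>u\<in>D. closed_nbhd V E u)"

definition is_dominating :: "'a set \<Rightarrow> ('a \<Rightarrow> 'a \<Rightarrow> bool) \<Rightarrow> 'a set \<Rightarrow> bool" where
  "is_dominating V E D \<longleftrightarrow> D \<subseteq> V \<and> V \<subseteq> dominated_by V E D"

text \<open>In each round Dominator indicates an undominated vertex v and
  Staller picks some vertex of N[v].\<close>

primrec dom_wins_within :: "'a set \<Rightarrow> ('a \<Rightarrow> 'a \<Rightarrow> bool) \<Rightarrow> nat \<Rightarrow> 'a set \<Rightarrow> bool" where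
  "dom_wins_within V E 0 D = is_dominating V E D"
| "dom_wins_within V E (Suc k) D =
     (is_dominating V E D \<or>
      (\<exists>v \<in> V - dominated_by V E D.
         \<forall>u \<in> closed_nbhd V E v. dom_wins_within V E k (insert u D)))"

text \<open>Every selected vertex is new (it dominates the indicated, previously
  undominated vertex), so the number of moves equals |D|.\<close>

definition indicated_domination_number :: "'a set \<Rightarrow> ('a \<Rightarrow> 'a \<Rightarrow> bool) \<Rightarrow> nat" where
  "indicated_domination_number V E = (LEAST k. dom_wins_within V E k {})"

definition path_adj :: "nat \<Rightarrow> nat \<Rightarrow> bool" where
  "path_adj i j \<longleftrightarrow> i + 1 = j \<or> j + 1 = i"

end

theory Submission
  imports Defs
begin

lemma cn_iff: "w \<in> closed_nbhd {0..<n} path_adj v \<longleftrightarrow> w = v \<or> (w < n \<and> (v+1 = w \<or> w+1 = v))"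
  by (auto simp: closed_nbhd_def path_adj_def)

lemma card_le1: "A \<subseteq> {w} \<Longrightarrow> card A \<le> 1"
  using card_mono[of "{w}" A] by simp

lemma dom_insert: "dominated_by V E (insert u D) = closed_nbhd V E u \<union> dominated_by V E D"
  by (simp add: dominated_by_def)

lemma dom_wins_dominating: "is_dominating V E D \<Longrightarrow> dom_wins_within V E k D"
  by (cases k) auto

lemma dom_wins_mono: "dom_wins_within V E k D \<Longrightarrow> k \<le> k' \<Longrightarrow> dom_wins_within V E k' D"
proof (induction k arbitrary: k' D)
  case 0
  then show ?case using dom_wins_dominating by auto
next
  case (Suc k)
  then obtain k'' where k': "k' = Suc k''" "k \<le> k''" by (cases k') auto
  from Suc.prems(1) show ?case
    unfolding k' using Suc.IH[OF _ k'(2)] by auto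
qed

lemma lower:
  assumes "S \<subseteq> {0..<n} - dominated_by {0..<n} path_adj D"
    and "\<forall>i. i \<in> S \<longrightarrow> Suc i \<notin> S" and "card S > k" and "finite S"
  shows "\<not> dom_wins_within {0..<n} path_adj k D"
  using assms
proof (induction k arbitrary: S D)
  case 0
  then obtain s where "s \<in> S" by fastforce
  then show ?case using 0 by (auto simp: is_dominating_def)
next
  case (Suc k)
  let ?V = "{0..<n::nat}"
  from Suc.prems obtain s where s: "s \<in> S" by fastforce
  have nd: "\<not> is_dominating ?V path_adj D" using Suc.prems(1) s by (auto simp: is_dominating_def)
  have "\<exists>u \<in> closed_nbhd ?V path_adj v. \<not> dom_wins_within ?V path_adj k (insert u D)"
    if v: "v \<in> ?V - dominated_by ?V path_adj D" for v
  proof -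
    have vS: "v \<in> ?V" using v by auto
    obtain u where u: "u \<in> closed_nbhd ?V path_adj v" and sub: "S \<inter> closed_nbhd ?V path_adj u \<subseteq> {w. w \<in> S}"
      and c1: "card (S \<inter> closed_nbhd ?V path_adj u) \<le> 1"
    proof (cases "\<exists>u. Suc u = v \<and> u \<in> S \<and> Suc v \<in> S")
      case True
      then obtain u where h: "Suc u = v" "u \<in> S" "Suc v \<in> S" by blast
      have "S \<inter> closed_nbhd ?V path_adj u \<subseteq> {u}"
        using h Suc.prems(2) by (auto simp: cn_iff)
      hence "card (S \<inter> closed_nbhd ?V path_adj u) \<le> 1"
        by (rule card_le1)
      moreover have "u \<in> closed_nbhd ?V path_adj v" using h vS by (auto simp: cn_iff)
      ultimately show ?thesis using that by blast
    next
      case False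
      have "\<exists>w. S \<inter> closed_nbhd ?V path_adj v \<subseteq> {w}"
      proof (cases "v \<in> S")
        case True
        then show ?thesis using Suc.prems(2)
          by (intro exI[of _ v]) (auto simp: cn_iff)
      next
        case vn: False
        show ?thesis
        proof (cases "v \<ge> 1 \<and> v - 1 \<in> S")
          case True
          then have "Suc v \<notin> S" using False by (metis Suc_diff_1 less_le_trans zero_less_one)
          then show ?thesis using vn True
            by (intro exI[of _ "v - 1"]) (auto simp: cn_iff)
        next
          case f2: False
          then show ?thesis using vn
            by (intro exI[of _ "Suc v"]) (auto simp: cn_iff)
        qed
      qed
      then obtain w where "S \<inter> closed_nbhd ?V path_adj v \<subseteq> {w}" by blast
      hence "card (S \<inter> closed_nbhd ?V path_adj v) \<le> 1"
        by (rule card_le1)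
      moreover have "v \<in> closed_nbhd ?V path_adj v" by (auto simp: cn_iff)
      ultimately show ?thesis using that by blast
    qed
    let ?S' = "S - closed_nbhd ?V path_adj u"
    have cS: "card ?S' = card S - card (S \<inter> closed_nbhd ?V path_adj u)"
      using Suc.prems(4) by (metis card_Diff_subset_Int finite_Int)
    have "card ?S' > k" using cS c1 Suc.prems(3) by linarith
    moreover have "?S' \<subseteq> ?V - dominated_by ?V path_adj (insert u D)"
      using Suc.prems(1) by (auto simp: dom_insert)
    moreover have "\<forall>i. i \<in> ?S' \<longrightarrow> Suc i \<notin> ?S'" using Suc.prems(2) by auto
    moreover have "finite ?S'" using Suc.prems(4) by auto
    ultimately have "\<not> dom_wins_within ?V path_adj k (insert u D)"
      using Suc.IH by blast
    then show ?thesis using u by blast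
  qed
  then show ?case using nd by auto
qed

lemma upper:
  assumes "m \<le> n" "D \<subseteq> {0..<n}" "{0..<m} \<subseteq> dominated_by {0..<n} path_adj D"
  shows "dom_wins_within {0..<n} path_adj ((n - m + 1) div 2) D"
  using assms
proof (induction "n - m" arbitrary: m D rule: less_induct)
  case less
  let ?V = "{0..<n::nat}"
  show ?case
  proof (cases "is_dominating ?V path_adj D")
    case True
    then show ?thesis by (rule dom_wins_dominating)
  next
    case False
    then obtain w where w: "w \<in> ?V - dominated_by ?V path_adj D"
      using less.prems(2) unfolding is_dominating_def by blast
    define v where "v = (LEAST w. w \<in> ?V - dominated_by ?V path_adj D)"
    have v: "v \<in> ?V - dominated_by ?V path_adj D" unfolding v_def by (rule LeastI[where P="\<lambda>w. w \<in> ?V - dominated_by ?V path_adj D", OF w])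
    have below: "i < v \<Longrightarrow> i \<in> dominated_by ?V path_adj D" for i
      using not_less_Least[of i "\<lambda>w. w \<in> ?V - dominated_by ?V path_adj D"] v
      unfolding v_def[symmetric] by auto
    have vm: "m \<le> v" using v less.prems(3) by (metis atLeastLessThan_iff Diff_iff not_le subsetD zero_le)
    have vn: "v < n" using v by auto
    define m' where "m' = min (v+2) n"
    have m'1: "m < m'" "m' \<le> n" using vm vn unfolding m'_def by auto
    have kk: "(n - m + 1) div 2 = Suc ((n - m + 1) div 2 - 1)" using vm vn by auto
    have kk2: "(n - m' + 1) div 2 \<le> (n - m + 1) div 2 - 1"
      using vm vn unfolding m'_def by (cases "v + 2 \<le> n") (simp_all add: min_def; presburger)+
    define x where "x = (if v+1 < n \<and> v+1 \<notin> dominated_by ?V path_adj D then v+1 else v)"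
    have xV: "x \<in> ?V - dominated_by ?V path_adj D" using v unfolding x_def by auto
    have step: "dom_wins_within ?V path_adj ((n - m + 1) div 2 - 1) (insert u D)"
      if u: "u \<in> closed_nbhd ?V path_adj x" and nu: "\<not> (x = v + 1 \<and> u = v + 2)" for u
    proof -
      have uV: "u \<in> ?V" using u xV by (auto simp: cn_iff)
      have "{0..<m'} \<subseteq> dominated_by ?V path_adj (insert u D)"
      proof
        fix i assume i: "i \<in> {0..<m'}"
        show "i \<in> dominated_by ?V path_adj (insert u D)"
        proof (cases "i < v")
          case True then show ?thesis using below by (auto simp: dom_insert)
        next
          case False
          then have "i = v \<or> (i = v + 1 \<and> v + 1 < n)" using i unfolding m'_def by auto
          then show ?thesis using u nu vn unfolding dom_insert x_def
            by (auto simp: cn_iff split: if_splits)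
        qed
      qed
      moreover have "insert u D \<subseteq> ?V" using uV less.prems(2) by auto
      moreover have "n - m' < n - m" using m'1 by auto
      ultimately have "dom_wins_within ?V path_adj ((n - m' + 1) div 2) (insert u D)"
        using less.hyps m'1 by blast
      then show ?thesis using kk2 dom_wins_mono by blast
    qed
    have step2: "dom_wins_within ?V path_adj ((n - m + 1) div 2 - 1) (insert (v+2) D)"
      if xv: "x = v + 1" and v2: "v + 2 < n"
    proof -
      define m'' where "m'' = min (v+4) n"
      have m''1: "m < m''" "m'' \<le> n" using vm vn unfolding m''_def by auto
      have k3: "(n - m + 1) div 2 - 1 = Suc ((n - m + 1) div 2 - 2)" using vm v2 by auto
      have k4: "(n - m'' + 1) div 2 \<le> (n - m + 1) div 2 - 2"
        using vm v2 unfolding m''_def by (cases "v + 4 \<le> n") (simp_all add: min_def; presburger)+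
      have vU: "v \<in> ?V - dominated_by ?V path_adj (insert (v+2) D)"
        using v by (auto simp: dom_insert cn_iff)
      have "dom_wins_within ?V path_adj ((n - m + 1) div 2 - 2) (insert u' (insert (v+2) D))"
        if u': "u' \<in> closed_nbhd ?V path_adj v" for u'
      proof -
        have u'V: "u' \<in> ?V" using u' vn by (auto simp: cn_iff)
        have "{0..<m''} \<subseteq> dominated_by ?V path_adj (insert u' (insert (v+2) D))"
        proof
          fix i assume i: "i \<in> {0..<m''}"
          show "i \<in> dominated_by ?V path_adj (insert u' (insert (v+2) D))"
          proof (cases "i < v")
            case True then show ?thesis using below by (auto simp: dom_insert)
          next
            case False
            then have "i = v \<or> i = v + 1 \<or> i = v + 2 \<or> (i = v + 3 \<and> v + 3 < n)"
              using i unfolding m''_def by auto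
            then show ?thesis using u' vn v2 unfolding dom_insert
              by (auto simp: cn_iff)
          qed
        qed
        moreover have "insert u' (insert (v+2) D) \<subseteq> ?V" using u'V v2 less.prems(2) by auto
        moreover have "n - m'' < n - m" using m''1 by auto
        ultimately have "dom_wins_within ?V path_adj ((n - m'' + 1) div 2) (insert u' (insert (v+2) D))"
          using less.hyps m''1 by blast
        then show ?thesis using k4 dom_wins_mono by blast
      qed
      then have "\<exists>w \<in> ?V - dominated_by ?V path_adj (insert (v+2) D). \<forall>u' \<in> closed_nbhd ?V path_adj w. dom_wins_within ?V path_adj ((n - m + 1) div 2 - 2) (insert u' (insert (v+2) D))" using vU by blast
      then show ?thesis by (subst k3) (simp only: dom_wins_within.simps; blast)
    qed
    have "\<forall>u \<in> closed_nbhd ?V path_adj x. dom_wins_within ?V path_adj ((n - m + 1) div 2 - 1) (insert u D)"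
    proof
      fix u assume u: "u \<in> closed_nbhd ?V path_adj x"
      show "dom_wins_within ?V path_adj ((n - m + 1) div 2 - 1) (insert u D)"
      proof (cases "x = v + 1 \<and> u = v + 2")
        case True
        then have "v + 2 < n" using u by (auto simp: cn_iff)
        then show ?thesis using True step2 by auto
      next
        case False then show ?thesis using step u by blast
      qed
    qed
    then show ?thesis by (subst kk) (use xV in auto)
  qed
qed

lemma card_evens: "card {i. i < n \<and> even (i::nat)} = (n + 1) div 2"
proof (induction n)
  case 0 then show ?case by simp
next
  case (Suc n)
  show ?case
  proof (cases "even n")
    case True
    have "{i. i < Suc n \<and> even i} = insert n {i. i < n \<and> even i}" using True by (auto simp: less_Suc_eq)
    then show ?thesis using Suc True by simp
  next
    case False
    have "{i. i < Suc n \<and> even i} = {i. i < n \<and> even i}" using False by (auto simp: less_Suc_eq)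
    then show ?thesis using Suc False by simp
  qed
qed

lemma ceil_half: "nat \<lceil>real n / 2\<rceil> = (n + 1) div 2"
proof -
  have "\<lceil>real n / 2\<rceil> = int ((n + 1) div 2)"
  proof (rule ceiling_unique)
    show "real n / 2 \<le> real_of_int (int ((n + 1) div 2))" by linarith
    show "real_of_int (int ((n + 1) div 2)) - 1 < real n / 2" by linarith
  qed
  then show ?thesis by simp
qed

theorem corollary5p3:
  fixes n :: nat
  assumes "n \<ge> 1"
  shows "indicated_domination_number {0..<n} path_adj = nat \<lceil>real n / 2\<rceil>"
proof -
  have w: "dom_wins_within {0..<n} path_adj ((n + 1) div 2) {}"
    using upper[of 0 n "{}"] by simp
  have nw: "\<not> dom_wins_within {0..<n} path_adj k {}" if "k < (n + 1) div 2" for k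
    by (rule lower[of "{i. i < n \<and> even i}"]) (use that card_evens in \<open>auto simp: dominated_by_def\<close>)
  have "(LEAST k. dom_wins_within {0..<n} path_adj k {}) = (n + 1) div 2"
    by (rule Least_equality) (use w nw not_le in auto)
  then show ?thesis by (simp add: indicated_domination_number_def ceil_half)
qed

end
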